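(* Let $f_1,\dots,f_{n_f}:\mathbb{R}^{n_x}\times\mathbb{R}^{n_u}\to\mathbb{R}^{n_x}$ and $g_1,\dots,g_{n_f}:\mathbb{R}^{n_x}\to\mathbb{R}$ be smooth, let $F(x,u)=[f_1(x,u),\dots,f_{n_f}(x,u)]$ and $g(x)=(g_1(x),\dots,g_{n_f}(x))$. Let $x:[0,T]\to\mathbb{R}^{n_x}$ be a continuous function and $\theta,\lambda:[0,T]\to\mathbb{R}^{n_f}$, $\mu:[0,T]\to\mathbb{R}$ functions such that $x,\theta,\lambda,\mu$ form a solution of the dynamic complementarity system $$\dot x=F(x,u)\theta,\quad 0=g(x)-\lambda-\mu e,\quad 1=e^\top\theta,\quad 0\le\theta\perp\lambda\ge 0,$$ where the algebraic conditions hold for every $t\in[0,T]$. Then the functions $\lambda(t)$ and $\mu(t)$ are continuous in time.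
   Context: $e$ denotes the vector of all ones; $0\le a\perp b\ge 0$ means $a\ge 0$, $b\ge 0$ componentwise and $a^\top b=0$. *)

theory Defs
  imports "HOL-Analysis.Analysis"
begin

text \<open>Smoothness (C-infinity) on the whole space: there is a family D of iterated
  Frechet derivatives, D vs y being the iterated derivative at y applied to the
  directions in vs, with D [] = f, each D vs continuous, and the Frechet derivative
  of D vs at y being h maps to D (h # vs) y.\<close>
definition smooth :: "('a::euclidean_space \<Rightarrow> 'b::real_normed_vector) \<Rightarrow> bool" where
  "smooth f \<longleftrightarrow> (\<exists>D :: 'a list \<Rightarrow> 'a \<Rightarrow> 'b.
      D [] = f \<and>
      (\<forall>vs. continuous_on UNIV (D vs)) \<and>
      (\<forall>vs y. (D vs has_derivative (\<lambda>h. D (h # vs) y)) (at y)))"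

text \<open>The matrix-vector product F(x,u) theta, where the columns of F are f_1..f_nf.\<close>
definition Fmul :: "('f::finite \<Rightarrow> (real^'nx) \<times> (real^'nu) \<Rightarrow> real^'nx) \<Rightarrow> real^'nx \<Rightarrow> real^'nu \<Rightarrow> real^'f \<Rightarrow> real^'nx" where
  "Fmul f x u th = (\<Sum>i\<in>UNIV. (th $ i) *\<^sub>R f i (x, u))"

end

theory Submission
  imports Defs
begin

lemma cont_Min_aux:
  fixes h :: "'i \<Rightarrow> real \<Rightarrow> real"
  assumes "finite A" "A \<noteq> {}" "\<And>i. continuous_on S (h i)"
  shows "continuous_on S (\<lambda>t. Min ((\<lambda>i. h i t) ` A))"
  using assms(1,2)
proof (induction A rule: finite_ne_induct)
  case (singleton y)
  then show ?case using assms(3) by simp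
next
  case (insert y F)
  have "continuous_on S (\<lambda>t. min (h y t) (Min ((\<lambda>i. h i t) ` F)))"
    by (intro continuous_on_min assms(3) insert.IH)
  moreover have "\<And>t. Min ((\<lambda>i. h i t) ` insert y F) = min (h y t) (Min ((\<lambda>i. h i t) ` F))"
    using insert by (simp add: Min_insert)
  ultimately show ?case by simp
qed

theorem lemma1:
  fixes f :: "'f::finite \<Rightarrow> (real^'nx) \<times> (real^'nu) \<Rightarrow> real^'nx"
    and g :: "'f \<Rightarrow> real^'nx \<Rightarrow> real"
    and T :: real
    and x :: "real \<Rightarrow> real^'nx"
    and u :: "real \<Rightarrow> real^'nu"
    and \<theta> lam :: "real \<Rightarrow> real^'f"
    and \<mu> :: "real \<Rightarrow> real"
  assumes f_smooth: "\<forall>i. smooth (f i)"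
    and g_smooth: "\<forall>i. smooth (g i)"
    and x_cont: "continuous_on {0..T} x"
    and ode: "\<exists>N. N \<in> null_sets lborel \<and>
       (\<forall>t\<in>{0..T} - N. (x has_vector_derivative Fmul f (x t) (u t) (\<theta> t)) (at t within {0..T}))"
    and alg: "\<forall>t\<in>{0..T}. \<forall>i. g i (x t) - lam t $ i - \<mu> t = 0"
    and sum1: "\<forall>t\<in>{0..T}. (\<Sum>i\<in>UNIV. \<theta> t $ i) = 1"
    and th_nn: "\<forall>t\<in>{0..T}. \<forall>i. \<theta> t $ i \<ge> 0"
    and la_nn: "\<forall>t\<in>{0..T}. \<forall>i. lam t $ i \<ge> 0"
    and compl: "\<forall>t\<in>{0..T}. \<theta> t \<bullet> lam t = 0"
  shows "continuous_on {0..T} lam \<and> continuous_on {0..T} \<mu>"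
proof -
  have gc: "\<And>i. continuous_on {0..T} (\<lambda>t. g i (x t))"
  proof -
    fix i
    from g_smooth have "smooth (g i)" by blast
    then obtain D :: "(real^'nx) list \<Rightarrow> real^'nx \<Rightarrow> real" where "D [] = g i" "\<forall>vs. continuous_on UNIV (D vs)"
      unfolding smooth_def by blast
    hence "continuous_on UNIV (D [])" by blast
    hence "continuous_on UNIV (g i)" using \<open>D [] = g i\<close> by simp
    thus "continuous_on {0..T} (\<lambda>t. g i (x t))"
      using continuous_on_compose2[OF _ x_cont] by blast
  qed
  have muMin: "\<mu> t = Min ((\<lambda>i. g i (x t)) ` UNIV)" if t: "t \<in> {0..T}" for t
  proof -
    have le: "\<mu> t \<le> g i (x t)" for i
    proof -
      have "g i (x t) - lam t $ i - \<mu> t = 0" "lam t $ i \<ge> 0" using alg la_nn t by auto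
      thus ?thesis by linarith
    qed
    have "\<exists>i. \<theta> t $ i > 0"
    proof (rule ccontr)
      assume "\<not> ?thesis"
      hence "\<forall>i. \<theta> t $ i = 0" using th_nn t by (metis linorder_not_le order_antisym)
      hence "(\<Sum>i\<in>UNIV. \<theta> t $ i) = 0" by simp
      thus False using sum1 t by simp
    qed
    then obtain j where j: "\<theta> t $ j > 0" by blast
    have "(\<Sum>i\<in>UNIV. \<theta> t $ i * lam t $ i) = 0" using compl t by (simp add: inner_vec_def)
    hence "\<forall>i\<in>UNIV. \<theta> t $ i * lam t $ i = 0"
      using th_nn la_nn t by (subst (asm) sum_nonneg_eq_0_iff) auto
    hence "\<theta> t $ j * lam t $ j = 0" by blast
    hence "lam t $ j = 0" using j by simp
    moreover have "g j (x t) - lam t $ j - \<mu> t = 0" using alg t by blast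
    ultimately have eq: "\<mu> t = g j (x t)" by linarith
    show ?thesis
      by (rule antisym) (auto simp: eq intro!: Min.coboundedI Min.boundedI le[unfolded eq])
  qed
  have muc: "continuous_on {0..T} \<mu>"
  proof -
    have "continuous_on {0..T} \<mu> = continuous_on {0..T} (\<lambda>t. Min ((\<lambda>i. g i (x t)) ` UNIV))"
      by (rule continuous_on_cong[OF refl]) (rule muMin)
    thus ?thesis using cont_Min_aux[where A=UNIV and h="\<lambda>i t. g i (x t)" and S="{0..T}", OF finite UNIV_not_empty gc]
      by simp
  qed
  have "continuous_on {0..T} (\<lambda>t. \<chi> i. g i (x t) - \<mu> t)"
    by (intro continuous_on_vec_lambda continuous_on_diff gc muc)
  moreover have "\<And>t. t \<in> {0..T} \<Longrightarrow> lam t = (\<chi> i. g i (x t) - \<mu> t)"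
    using alg by (auto simp: vec_eq_iff algebra_simps)
  moreover have "continuous_on {0..T} lam = continuous_on {0..T} (\<lambda>t. \<chi> i. g i (x t) - \<mu> t)"
    by (rule continuous_on_cong[OF refl]) (rule calculation(2))
  ultimately have "continuous_on {0..T} lam" by simp
  with muc show ?thesis by blast
qed

end
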